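(* Let $\{\chi^{(n)}_{n-j}\}_{1\le j\le n}$, $n\ge1$, be positive numbers, and let $\sigma_{\min}\in[0,2)$. Define $\mathsf a^{(n)}_0:=(2-\sigma_{\min})\chi^{(n)}_0$ and $\mathsf a^{(n)}_{n-j}:=\chi^{(n)}_{n-j}$ for $1\le j\le n-1$, and assume that for every $n\ge2$: (row decrease) $\mathsf a^{(n)}_{n-j-1}\ge\mathsf a^{(n)}_{n-j}>0$ for $1\le j\le n-1$; (column decrease) $\mathsf a^{(n-1)}_{n-1-j}\ge\mathsf a^{(n)}_{n-j}$ for $1\le j\le n-1$; (algebraic convexity) $\mathsf a^{(n-1)}_{n-2-j}-\mathsf a^{(n-1)}_{n-1-j}\ge\mathsf a^{(n)}_{n-1-j}-\mathsf a^{(n)}_{n-j}$ for $1\le j\le n-2$. For a real sequence $(w_k)_{k\ge1}$ and $n\ge1$ define $$Y_n:=\sum_{j=1}^{n-1}\big(\mathsf a^{(n)}_{n-j-1}-\mathsf a^{(n)}_{n-j}\big)\Big(\sum_{\ell=j+1}^n w_\ell\Big)^2+\mathsf a^{(n)}_{n-1}\Big(\sum_{\ell=1}^n w_\ell\Big)^2,\qquad Y_0:=0,$$ and for $n\ge2$ $$R_n:=\sum_{j=1}^{n-2}\big(\mathsf a^{(n-1)}_{n-2-j}-\mathsf a^{(n-1)}_{n-1-j}-\mathsf a^{(n)}_{n-j-1}+\mathsf a^{(n)}_{n-j}\big)\Big(\sum_{\ell=j+1}^{n-1}w_\ell\Big)^2+\big(\mathsf a^{(n-1)}_{n-2}-\mathsf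 a^{(n)}_{n-1}\big)\Big(\sum_{\ell=1}^{n-1}w_\ell\Big)^2,$$ $R_1:=0$. Then $Y_n\ge0$, $R_n\ge0$, $$2w_n\sum_{j=1}^n\chi^{(n)}_{n-j}w_j=Y_n-Y_{n-1}+\sigma_{\min}\chi^{(n)}_0w_n^2+R_n\qquad\text{for } n\ge1,$$ and consequently $$2\sum_{k=1}^n w_k\sum_{j=1}^k\chi^{(k)}_{k-j}w_j\ge Y_n+\sigma_{\min}\sum_{k=1}^n\chi^{(k)}_0w_k^2\qquad\text{for } n\ge1.$$ *)

theory Defs
  imports Complex_Main
begin

text \<open>chi n k stands for the kernel coefficient chi^(n)_k (used for 0 <= k <= n-1).\<close>

definition acoef :: "(nat \<Rightarrow> nat \<Rightarrow> real) \<Rightarrow> real \<Rightarrow> nat \<Rightarrow> nat \<Rightarrow> real" where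
  "acoef chi \<sigma> n k = (if k = 0 then (2 - \<sigma>) * chi n 0 else chi n k)"

definition Yfun :: "(nat \<Rightarrow> nat \<Rightarrow> real) \<Rightarrow> real \<Rightarrow> (nat \<Rightarrow> real) \<Rightarrow> nat \<Rightarrow> real" where
  "Yfun chi \<sigma> w n = (if n = 0 then 0 else
     (\<Sum>j=1..n-1. (acoef chi \<sigma> n (n-j-1) - acoef chi \<sigma> n (n-j)) * (\<Sum>l=j+1..n. w l)^2)
     + acoef chi \<sigma> n (n-1) * (\<Sum>l=1..n. w l)^2)"

definition Rfun :: "(nat \<Rightarrow> nat \<Rightarrow> real) \<Rightarrow> real \<Rightarrow> (nat \<Rightarrow> real) \<Rightarrow> nat \<Rightarrow> real" where
  "Rfun chi \<sigma> w n = (if n \<le> 1 then 0 else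
     (\<Sum>j=1..n-2. (acoef chi \<sigma> (n-1) (n-2-j) - acoef chi \<sigma> (n-1) (n-1-j)
                    - acoef chi \<sigma> n (n-j-1) + acoef chi \<sigma> n (n-j)) * (\<Sum>l=j+1..n-1. w l)^2)
     + (acoef chi \<sigma> (n-1) (n-2) - acoef chi \<sigma> n (n-1)) * (\<Sum>l=1..n-1. w l)^2)"

end

theory Submission
  imports Defs
begin

definition cc :: "(nat \<Rightarrow> nat \<Rightarrow> real) \<Rightarrow> real \<Rightarrow> nat \<Rightarrow> nat \<Rightarrow> real" where
  "cc chi \<sigma> n j = (if j = 1 then acoef chi \<sigma> n (n-1)
                     else acoef chi \<sigma> n (n-j) - acoef chi \<sigma> n (n-j+1))"

lemma L_abel:
  fixes c x :: "nat \<Rightarrow> real"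
  shows "(\<Sum>j=1..m. c j * (\<Sum>l=j..m. x l)) = (\<Sum>l=1..m. x l * (\<Sum>j=1..l. c j))"
proof (induction m)
  case 0
  then show ?case by simp
next
  case (Suc m)
  have "(\<Sum>j=1..Suc m. c j * (\<Sum>l=j..Suc m. x l))
      = (\<Sum>j=1..m. c j * (\<Sum>l=j..Suc m. x l)) + c (Suc m) * x (Suc m)"
    by simp
  also have "(\<Sum>j=1..m. c j * (\<Sum>l=j..Suc m. x l)) = (\<Sum>j=1..m. c j * (\<Sum>l=j..m. x l) + c j * x (Suc m))"
    by (rule sum.cong) (auto simp: distrib_left)
  also have "\<dots> = (\<Sum>l=1..m. x l * (\<Sum>j=1..l. c j)) + (\<Sum>j=1..m. c j) * x (Suc m)"
    by (simp only: sum.distrib Suc sum_distrib_right)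
  finally show ?case by (simp add: algebra_simps)
qed

lemma L1:
  fixes c x :: "nat \<Rightarrow> real"
  shows "(\<Sum>j=1..Suc m. c j * (\<Sum>l=j..Suc m. x l)^2)
       = (\<Sum>j=1..m. c j * (\<Sum>l=j..m. x l)^2) + (\<Sum>j=1..Suc m. c j) * x (Suc m)^2
         + 2 * x (Suc m) * (\<Sum>l=1..m. x l * (\<Sum>j=1..l. c j))"
proof -
  have "(\<Sum>j=1..Suc m. c j * (\<Sum>l=j..Suc m. x l)^2)
      = (\<Sum>j=1..m. c j * (\<Sum>l=j..Suc m. x l)^2) + c (Suc m) * x (Suc m)^2"
    by simp
  also have "(\<Sum>j=1..m. c j * (\<Sum>l=j..Suc m. x l)^2)
     = (\<Sum>j=1..m. c j * (\<Sum>l=j..m. x l)^2 + c j * x (Suc m)^2 + 2 * x (Suc m) * (c j * (\<Sum>l=j..m. x l)))"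
    by (rule sum.cong) (auto simp: power2_eq_square algebra_simps)
  also have "\<dots> = (\<Sum>j=1..m. c j * (\<Sum>l=j..m. x l)^2) + (\<Sum>j=1..m. c j) * x (Suc m)^2
      + 2 * x (Suc m) * (\<Sum>j=1..m. c j * (\<Sum>l=j..m. x l))"
    by (simp add: sum.distrib sum_distrib_left sum_distrib_right)
  also have "\<dots> = (\<Sum>j=1..m. c j * (\<Sum>l=j..m. x l)^2) + (\<Sum>j=1..m. c j) * x (Suc m)^2
      + 2 * x (Suc m) * (\<Sum>l=1..m. x l * (\<Sum>j=1..l. c j))"
    by (simp only: L_abel)
  finally show ?thesis by (simp add: algebra_simps)
qed

lemma sum_split1: "(\<Sum>j=1..Suc k. (f j::real)) = f 1 + (\<Sum>j=1..k. f (Suc j))"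
  by (induction k) auto

lemma L_Y: "Yfun chi \<sigma> w n = (\<Sum>j=1..n. cc chi \<sigma> n j * (\<Sum>l=j..n. w l)^2)"
proof (cases "n = 0")
  case True then show ?thesis by (simp add: Yfun_def)
next
  case False
  then obtain k where k: "n = Suc k" by (cases n) auto
  have "(\<Sum>j=1..n. cc chi \<sigma> n j * (\<Sum>l=j..n. w l)^2)
     = cc chi \<sigma> n 1 * (\<Sum>l=1..n. w l)^2 + (\<Sum>j=1..n-1. cc chi \<sigma> n (Suc j) * (\<Sum>l=Suc j..n. w l)^2)"
    unfolding k by (subst sum.atLeast_Suc_atMost) (simp_all only: sum.shift_bounds_cl_Suc_ivl One_nat_def diff_Suc_1, simp)
  also have "(\<Sum>j=1..n-1. cc chi \<sigma> n (Suc j) * (\<Sum>l=Suc j..n. w l)^2)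
     = (\<Sum>j=1..n-1. (acoef chi \<sigma> n (n-j-1) - acoef chi \<sigma> n (n-j)) * (\<Sum>l=j+1..n. w l)^2)"
    by (rule sum.cong) (auto simp: cc_def Suc_diff_Suc)
  finally show ?thesis using False by (simp add: Yfun_def cc_def)
qed

lemma L_R:
  assumes "n \<ge> 1"
  shows "Rfun chi \<sigma> w n = (\<Sum>j=1..n-1. (cc chi \<sigma> (n-1) j - cc chi \<sigma> n j) * (\<Sum>l=j..n-1. w l)^2)"
proof (cases "n = 1")
  case True then show ?thesis by (simp add: Rfun_def)
next
  case False
  then obtain k where k: "n = Suc (Suc k)" using assms by (cases n; cases "n - 1") auto
  have "(\<Sum>j=1..n-1. (cc chi \<sigma> (n-1) j - cc chi \<sigma> n j) * (\<Sum>l=j..n-1. w l)^2)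
     = (cc chi \<sigma> (n-1) 1 - cc chi \<sigma> n 1) * (\<Sum>l=1..n-1. w l)^2
       + (\<Sum>j=1..n-2. (cc chi \<sigma> (n-1) (Suc j) - cc chi \<sigma> n (Suc j)) * (\<Sum>l=Suc j..n-1. w l)^2)"
    unfolding k using sum_split1[where k=k and f="\<lambda>j. (cc chi \<sigma> (Suc k) j - cc chi \<sigma> (Suc (Suc k)) j) * (\<Sum>l=j..Suc k. w l)^2"]
    by simp
  also have "(\<Sum>j=1..n-2. (cc chi \<sigma> (n-1) (Suc j) - cc chi \<sigma> n (Suc j)) * (\<Sum>l=Suc j..n-1. w l)^2)
     = (\<Sum>j=1..n-2. (acoef chi \<sigma> (n-1) (n-2-j) - acoef chi \<sigma> (n-1) (n-1-j)
                    - acoef chi \<sigma> n (n-j-1) + acoef chi \<sigma> n (n-j)) * (\<Sum>l=j+1..n-1. w l)^2)"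
    by (rule sum.cong) (auto simp: cc_def k Suc_diff_Suc Suc_diff_le)
  finally show ?thesis using False assms k by (simp add: Rfun_def cc_def)
qed

lemma L_tel:
  assumes "1 \<le> l" "l \<le> n"
  shows "(\<Sum>j=1..l. cc chi \<sigma> n j) = acoef chi \<sigma> n (n-l)"
  using assms
proof (induction l)
  case 0 then show ?case by simp
next
  case (Suc l)
  show ?case
  proof (cases "l = 0")
    case True then show ?thesis by (simp add: cc_def)
  next
    case False
    then have "(\<Sum>j=1..Suc l. cc chi \<sigma> n j) = acoef chi \<sigma> n (n-l) + cc chi \<sigma> n (Suc l)"
      using Suc by simp
    also have "\<dots> = acoef chi \<sigma> n (n - Suc l)" using Suc.prems False
      by (simp add: cc_def Suc_diff_Suc)
    finally show ?thesis .
  qed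
qed

theorem lemma2p3:
  fixes chi :: "nat \<Rightarrow> nat \<Rightarrow> real" and \<sigma> :: real and w :: "nat \<Rightarrow> real"
  assumes pos: "\<forall>n\<ge>1. \<forall>j\<in>{1..n}. chi n (n-j) > 0"
    and sig: "0 \<le> \<sigma>" "\<sigma> < 2"
    and row: "\<forall>n\<ge>2. \<forall>j\<in>{1..n-1}.
                 acoef chi \<sigma> n (n-j-1) \<ge> acoef chi \<sigma> n (n-j) \<and> acoef chi \<sigma> n (n-j) > 0"
    and col: "\<forall>n\<ge>2. \<forall>j\<in>{1..n-1}. acoef chi \<sigma> (n-1) (n-1-j) \<ge> acoef chi \<sigma> n (n-j)"
    and conv: "\<forall>n\<ge>2. \<forall>j\<in>{1..n-2}.
                 acoef chi \<sigma> (n-1) (n-2-j) - acoef chi \<sigma> (n-1) (n-1-j)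
                   \<ge> acoef chi \<sigma> n (n-1-j) - acoef chi \<sigma> n (n-j)"
  shows "\<forall>n\<ge>1. Yfun chi \<sigma> w n \<ge> 0 \<and> Rfun chi \<sigma> w n \<ge> 0
           \<and> 2 * w n * (\<Sum>j=1..n. chi n (n-j) * w j)
               = Yfun chi \<sigma> w n - Yfun chi \<sigma> w (n-1) + \<sigma> * chi n 0 * (w n)^2 + Rfun chi \<sigma> w n
           \<and> 2 * (\<Sum>k=1..n. w k * (\<Sum>j=1..k. chi k (k-j) * w j))
               \<ge> Yfun chi \<sigma> w n + \<sigma> * (\<Sum>k=1..n. chi k 0 * (w k)^2)"
proof -
  have ccpos: "cc chi \<sigma> n j \<ge> 0" if "1 \<le> n" "1 \<le> j" "j \<le> n" for n j
  proof (cases "j = 1")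
    case True
    show ?thesis
    proof (cases "n = 1")
      case True
      have "chi 1 0 > 0" using pos[rule_format, of 1 1] by simp
      with \<open>j=1\<close> True sig show ?thesis by (simp add: cc_def acoef_def)
    next
      case False
      then have "n \<ge> 2" using that by auto
      then have "acoef chi \<sigma> n (n-1) > 0" using row[rule_format, of n 1] by auto
      with True show ?thesis by (simp add: cc_def)
    qed
  next
    case False
    then have "n \<ge> 2" "j - 1 \<in> {1..n-1}" using that by auto
    with row have h: "acoef chi \<sigma> n (n-(j-1)-1) \<ge> acoef chi \<sigma> n (n-(j-1))" by blast
    have e: "n-(j-1)-1 = n-j" "n-(j-1) = n-j+1" using that False by auto
    have "acoef chi \<sigma> n (n-j) \<ge> acoef chi \<sigma> n (n-j+1)" using h[unfolded e(1), unfolded e(2)] .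
    then show ?thesis using False by (simp add: cc_def)
  qed
  have ccdiff: "cc chi \<sigma> (n-1) j - cc chi \<sigma> n j \<ge> 0" if "2 \<le> n" "1 \<le> j" "j \<le> n-1" for n j
  proof (cases "j = 1")
    case True
    with col that have "acoef chi \<sigma> (n-1) (n-1-1) \<ge> acoef chi \<sigma> n (n-1)" by auto
    then show ?thesis using True by (simp add: cc_def)
  next
    case False
    then have "j - 1 \<in> {1..n-2}" using that by auto
    with conv that have "acoef chi \<sigma> (n-1) (n-2-(j-1)) - acoef chi \<sigma> (n-1) (n-1-(j-1))
                   \<ge> acoef chi \<sigma> n (n-1-(j-1)) - acoef chi \<sigma> n (n-(j-1))" by blast
    moreover have "n-2-(j-1) = n-1-j" "n-1-(j-1) = n-1-j+1" "n-1-(j-1) = n-j" "n-(j-1) = n-j+1"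
      using that False by auto
    ultimately have "acoef chi \<sigma> (n-1) (n-1-j) - acoef chi \<sigma> (n-1) (n-1-j+1)
                   \<ge> acoef chi \<sigma> n (n-j) - acoef chi \<sigma> n (n-j+1)" by metis
    then show ?thesis using False by (simp add: cc_def)
  qed
  have Ypos: "Yfun chi \<sigma> w n \<ge> 0" if "n \<ge> 1" for n
    unfolding L_Y using ccpos that by (intro sum_nonneg mult_nonneg_nonneg) auto
  have Rpos: "Rfun chi \<sigma> w n \<ge> 0" if "n \<ge> 1" for n
  proof (cases "n = 1")
    case True then show ?thesis by (simp add: Rfun_def)
  next
    case False
    then show ?thesis unfolding L_R[OF that] using ccdiff that
      by (intro sum_nonneg mult_nonneg_nonneg) auto
  qed
  have ident: "2 * w n * (\<Sum>j=1..n. chi n (n-j) * w j)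
               = Yfun chi \<sigma> w n - Yfun chi \<sigma> w (n-1) + \<sigma> * chi n 0 * (w n)^2 + Rfun chi \<sigma> w n"
    if n1: "n \<ge> 1" for n
  proof -
    obtain m where m: "n = Suc m" using n1 by (cases n) (auto)
    have Y1: "Yfun chi \<sigma> w n = (\<Sum>j=1..m. cc chi \<sigma> n j * (\<Sum>l=j..m. w l)^2)
         + acoef chi \<sigma> n 0 * w n ^2 + 2 * w n * (\<Sum>l=1..m. w l * acoef chi \<sigma> n (n-l))"
    proof -
      have "(\<Sum>l=1..m. w l * (\<Sum>j=1..l. cc chi \<sigma> n j)) = (\<Sum>l=1..m. w l * acoef chi \<sigma> n (n-l))"
      proof (rule sum.cong)
        fix x assume "x \<in> {1..m}"
        then have "(\<Sum>j=1..x. cc chi \<sigma> n j) = acoef chi \<sigma> n (n-x)"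
          using m by (intro L_tel) auto
        then show "w x * (\<Sum>j=1..x. cc chi \<sigma> n j) = w x * acoef chi \<sigma> n (n-x)" by simp
      qed simp
      moreover have "(\<Sum>j=1..Suc m. cc chi \<sigma> n j) = acoef chi \<sigma> n 0"
        using L_tel[of "Suc m" n chi \<sigma>] m by simp
      ultimately show ?thesis unfolding L_Y m L1 by simp
    qed
    have Y0: "Yfun chi \<sigma> w (n-1) = (\<Sum>j=1..m. cc chi \<sigma> m j * (\<Sum>l=j..m. w l)^2)"
      using L_Y m by simp
    have R: "Rfun chi \<sigma> w n = (\<Sum>j=1..m. (cc chi \<sigma> m j - cc chi \<sigma> n j) * (\<Sum>l=j..m. w l)^2)"
      using L_R[OF n1] m by simp
    have S: "(\<Sum>l=1..m. w l * acoef chi \<sigma> n (n-l)) = (\<Sum>l=1..m. chi n (n-l) * w l)"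
      by (rule sum.cong) (auto simp: acoef_def m)
    have T: "(\<Sum>j=1..n. chi n (n-j) * w j) = (\<Sum>l=1..m. chi n (n-l) * w l) + chi n 0 * w n"
      by (simp add: m)
    have "Yfun chi \<sigma> w n - Yfun chi \<sigma> w (n-1) + Rfun chi \<sigma> w n
       = acoef chi \<sigma> n 0 * w n ^2 + 2 * w n * (\<Sum>l=1..m. chi n (n-l) * w l)"
      unfolding Y1 Y0 R S by (simp add: sum_subtractf algebra_simps)
    then show ?thesis unfolding T by (simp add: acoef_def algebra_simps power2_eq_square)
  qed
  have tot: "2 * (\<Sum>k=1..n. w k * (\<Sum>j=1..k. chi k (k-j) * w j))
               \<ge> Yfun chi \<sigma> w n + \<sigma> * (\<Sum>k=1..n. chi k 0 * (w k)^2)" for n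
  proof (induction n)
    case 0 then show ?case by (simp add: Yfun_def)
  next
    case (Suc n)
    have "2 * (\<Sum>k=1..Suc n. w k * (\<Sum>j=1..k. chi k (k-j) * w j))
        = 2 * (\<Sum>k=1..n. w k * (\<Sum>j=1..k. chi k (k-j) * w j))
          + 2 * w (Suc n) * (\<Sum>j=1..Suc n. chi (Suc n) (Suc n - j) * w j)"
      by (simp add: algebra_simps)
    also have "\<dots> = 2 * (\<Sum>k=1..n. w k * (\<Sum>j=1..k. chi k (k-j) * w j))
          + (Yfun chi \<sigma> w (Suc n) - Yfun chi \<sigma> w n + \<sigma> * chi (Suc n) 0 * (w (Suc n))^2 + Rfun chi \<sigma> w (Suc n))"
      using ident[of "Suc n"] by simp
    finally show ?case using Suc.IH Rpos[of "Suc n"] by (simp add: algebra_simps)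
  qed
  show ?thesis using Ypos Rpos ident tot by blast
qed

end
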